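(* Fix an integer $k\ge1$. Let $M$ be the set consisting of the empty composition together with all Fibonacci compositions of even numbers that start with $(1,2^{k-1})$. Let $Q$ be the free monoid (under concatenation) whose primes are the compositions $(1,2^l,1,2^{j})$ with $l\ge0$ and $0\le j\le k-2$ (so $Q$ contains only the empty composition when $k=1$). Then $M$ is a free monoid under concatenation whose primes are exactly the compositions of the form $(1,2^{k-1},2^i,q,1,2^j)$ with $i,j\ge0$ integers and $q\in Q$. Moreover, assigning weight $n$ to a composition of $2n$, the generating function of the primes of $M$ is $\dfrac{x^k}{1-3x+x^2+x^k}$, and $$1+\sum_{n\ge 0}F_{2n+2}x^{n+k}=1+\frac{x^k}{1-3x+x^2}=\Bigl(1-\frac{x^k}{1-3x+x^2+x^k}\Bigr)^{-1}.$$
   Context: A Fibonacci composition is a composition (finite sequence of positive integers) with all parts equal to $1$ or $2$; a Fibonacci composition of $n$ is one whose parts sum to $n$. $2^j$ denotes $j$ consecutive parts equal to $2$. A free monoid is one in which every element factors uniquely as a product of primes. The generating function of a set $S$ of compositions of even numbers is $\sum_{c\in S}x^{|c|/2}$, $|c|$ the sum of the parts. Fibonacci numbers: $F_0=0$, $F_1=1$, $F_n=F_{n-1}+F_{n-2}$. *)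

theory Defs
  imports "HOL-Computational_Algebra.Formal_Power_Series" "HOL-Number_Theory.Fib"
begin

text \<open>Compositions are lists of positive naturals; concatenation is the monoid operation.\<close>

definition fib_comp :: "nat list \<Rightarrow> bool" where
  "fib_comp c \<longleftrightarrow> set c \<subseteq> {1, 2}"

definition prime_of :: "nat list set \<Rightarrow> nat list \<Rightarrow> bool" where
  "prime_of M c \<longleftrightarrow> c \<in> M \<and> c \<noteq> [] \<and>
     (\<forall>a b. a \<in> M \<longrightarrow> b \<in> M \<longrightarrow> c = a @ b \<longrightarrow> a = [] \<or> b = [])"

definition free_monoid :: "nat list set \<Rightarrow> bool" where
  "free_monoid M \<longleftrightarrow> [] \<in> M \<and> (\<forall>a\<in>M. \<forall>b\<in>M. a @ b \<in> M) \<and>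
     (\<forall>c\<in>M. \<exists>!ps. set ps \<subseteq> {p. prime_of M p} \<and> concat ps = c)"

definition M_set :: "nat \<Rightarrow> nat list set" where
  "M_set k = {c. c = [] \<or> (fib_comp c \<and> even (sum_list c) \<and>
                 (\<exists>r. c = (1 # replicate (k - 1) 2) @ r))}"

definition Q_primes :: "nat \<Rightarrow> nat list set" where
  "Q_primes k = {[1] @ replicate l 2 @ [1] @ replicate j 2 | l j. j + 2 \<le> k}"

definition Q_set :: "nat \<Rightarrow> nat list set" where
  "Q_set k = {concat ps | ps. set ps \<subseteq> Q_primes k}"

definition P_set :: "nat \<Rightarrow> nat list set" where
  "P_set k = {(1 # replicate (k - 1) 2) @ replicate i 2 @ q @ [1] @ replicate j 2
              | i j q. q \<in> Q_set k}"

definition gen_fun :: "nat list set \<Rightarrow> rat fps" where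
  "gen_fun S = Abs_fps (\<lambda>n. of_nat (card {c \<in> S. sum_list c = 2 * n}))"

end

theory Submission
  imports Defs
begin
unbundle fps_syntax


lemma fib_rec4: "fib (m+4) + fib m = 3 * fib (m+2)"
proof -
  have "fib (m+4) = fib (m+3) + fib (m+2)" by (simp add: numeral_eq_Suc)
  moreover have "fib (m+3) = fib (m+2) + fib (m+1)" by (simp add: numeral_eq_Suc)
  moreover have "fib (m+2) = fib (m+1) + fib m" by (simp add: numeral_eq_Suc)
  ultimately show ?thesis by simp
qed

abbreviation EE :: "rat fps" where "EE \<equiv> 1 - 3 * fps_X + fps_X ^ 2"

definition fa :: "nat \<Rightarrow> rat" where "fa n = of_nat (fib (2*n+2))"

lemma fa_rec: "fa (m+2) = 3 * fa (m+1) - fa m"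
proof -
  have "of_nat (fib (2*m+4)) + (of_nat (fib (2*m)) :: rat) = 3 * of_nat (fib (2*m+2))"
    using fib_rec4[of "2*m"] by (metis of_nat_add of_nat_mult of_nat_numeral)
  then show ?thesis unfolding fa_def by (simp add: algebra_simps)
qed

lemma fibA: "Abs_fps fa * EE = (1::rat fps)"
proof (rule fps_ext)
  fix n
  let ?A = "Abs_fps fa"
  have e: "?A * EE = ?A - fps_const 3 * (fps_X * ?A) + fps_X^2 * ?A"
    by (simp add: algebra_simps numeral_fps_const)
  have "(?A * EE) $ n = fa n - 3 * (if n = 0 then 0 else fa (n - 1)) + (if n < 2 then 0 else fa (n-2))"
    unfolding e by (simp add: fps_X_power_mult_nth del: power_Suc)
  also have "\<dots> = 1 $ n"
  proof (cases "n < 2")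
    case True then have "n = 0 \<or> n = 1" by auto
    then show ?thesis by (auto simp: fa_def numeral_eq_Suc)
  next
    case False
    then obtain m where m: "n = m + 2" by (metis add.commute le_Suc_ex not_less)
    show ?thesis using m fa_rec[of m] by simp
  qed
  finally show "(?A * EE) $ n = 1 $ n" .
qed

lemma invEE: "inverse EE = Abs_fps fa"
  by (rule fps_inverse_unique) (metis fibA mult.commute)

lemma conj5:
  "1 + Abs_fps (\<lambda>m. if k \<le> m then of_nat (fib (2 * (m - k) + 2)) else 0)
        = (1 + fps_X ^ k / EE :: rat fps)"
proof -
  have "fps_X ^ k / EE = fps_X^k * inverse EE" by (rule fps_divide_unit) simp
  also have "\<dots> = Abs_fps (\<lambda>m. if k \<le> m then of_nat (fib (2 * (m - k) + 2)) else 0)"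
    unfolding invEE by (rule fps_ext) (simp add: fps_X_power_mult_nth fa_def)
  finally show ?thesis by simp
qed

lemma conj6:
  assumes "k \<ge> 1"
  shows "(1 + fps_X ^ k / EE :: rat fps) = inverse (1 - fps_X ^ k / (EE + fps_X ^ k))"
proof -
  define D where "D = EE + fps_X ^ k"
  define E where "E = EE"
  have D0: "D $ 0 = 1" using assms by (simp add: D_def)
  have 1: "fps_X ^ k / E = fps_X^k * inverse E" unfolding E_def by (rule fps_divide_unit) simp
  have 2: "fps_X ^ k / D = fps_X^k * inverse D" by (rule fps_divide_unit) (simp add: D0)
  have u: "E * inverse E = 1" unfolding E_def by (rule inverse_mult_eq_1') simp
  have v: "D * inverse D = 1" by (rule inverse_mult_eq_1') (simp add: D0)
  have DE: "D = E + fps_X^k" by (simp add: D_def E_def)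
  have a: "1 - fps_X^k * inverse D = E * inverse D"
    using v unfolding DE by (simp add: algebra_simps)
  have b: "1 + fps_X^k * inverse E = D * inverse E"
    using u unfolding DE by (simp add: algebra_simps)
  have "(1 - fps_X^k * inverse D) * (1 + fps_X^k * inverse E) = (D * inverse D) * (E * inverse E)"
    unfolding a b by (simp only: ac_simps)
  also have "\<dots> = 1" using u v by simp
  finally have "inverse (1 - fps_X^k * inverse D) = 1 + fps_X^k * inverse E"
    by (rule fps_inverse_unique)
  then show ?thesis using 1 2 by (simp add: D_def E_def)
qed



abbreviation pre :: "nat \<Rightarrow> nat list" where "pre k \<equiv> 1 # replicate (k - 1) 2"

lemma fib_comp_append[simp]: "fib_comp (a @ b) \<longleftrightarrow> fib_comp a \<and> fib_comp b"
  by (auto simp: fib_comp_def)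
lemma fib_comp_Cons[simp]: "fib_comp (x # b) \<longleftrightarrow> (x = 1 \<or> x = 2) \<and> fib_comp b"
  by (auto simp: fib_comp_def)
lemma fib_comp_Nil[simp]: "fib_comp []"
  by (auto simp: fib_comp_def)
lemma fib_comp_rep[simp]: "fib_comp (replicate n 2)"
  by (auto simp: fib_comp_def)

lemma M_iff: "c \<in> M_set k \<longleftrightarrow> c = [] \<or> (fib_comp c \<and> even (sum_list c) \<and> (\<exists>r. c = pre k @ r))"
  by (simp add: M_set_def)

lemma M_Nil[simp]: "[] \<in> M_set k" by (simp add: M_iff)

lemma M_fib: "c \<in> M_set k \<Longrightarrow> fib_comp c" by (auto simp: M_iff)
lemma M_even: "c \<in> M_set k \<Longrightarrow> even (sum_list c)" by (auto simp: M_iff)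

lemma M_closed: "a \<in> M_set k \<Longrightarrow> b \<in> M_set k \<Longrightarrow> a @ b \<in> M_set k"
  by (auto simp: M_iff)

lemma M_concat: "set xs \<subseteq> M_set k \<Longrightarrow> concat xs \<in> M_set k"
  by (induction xs) (auto intro: M_closed)

lemma rep2_eq: "\<forall>y\<in>set x. y = 2 \<Longrightarrow> x = replicate (length x) 2"
  by (simp add: replicate_length_same)

lemma H:
  assumes "us \<noteq> []" "fib_comp us" "even (sum_list us)" "us @ r' = pre k @ r0"
  shows "us \<in> M_set k"
proof -
  from assms(4) obtain vs where
    "(us = pre k @ vs \<and> vs @ r' = r0) \<or> (us @ vs = pre k \<and> r' = vs @ r0)"
    using assms(4) unfolding append_eq_append_conv2 by blast
  then show ?thesis
  proof
    assume "us = pre k @ vs \<and> vs @ r' = r0"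
    then show ?thesis using assms by (auto simp: M_iff)
  next
    assume a: "us @ vs = pre k \<and> r' = vs @ r0"
    from assms(1) obtain y x where us: "us = y # x" by (cases us) auto
    with a have y: "y = 1" and xv: "x @ vs = replicate (k-1) 2" by auto
    have "\<forall>z\<in>set x. z = 2" proof
    fix z assume "z \<in> set x"
    then have "z \<in> set (x @ vs)" by simp
    then show "z = 2" unfolding xv by simp
  qed
    then have "x = replicate (length x) 2" by (rule rep2_eq)
    then have "sum_list us = 1 + 2 * length x" using us y
      by (metis sum_list.Cons sum_list_replicate mult.commute of_nat_id)
    with assms(3) show ?thesis by simp
  qed
qed

lemma prime_M: "prime_of M p \<Longrightarrow> p \<in> M \<and> p \<noteq> []" by (simp add: prime_of_def)

lemma U1:
  assumes "prime_of (M_set k) p" "prime_of (M_set k) p'" "r \<in> M_set k" 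
    "p' = p @ us" "r = us @ r'"
  shows "us = []"
proof (rule ccontr)
  assume ne: "us \<noteq> []"
  then have "r \<noteq> []" using assms(5) by simp
  with assms(3) obtain r0 where r0: "r = pre k @ r0" by (auto simp: M_iff)
  have pM: "p \<in> M_set k" "p \<noteq> []" "p' \<in> M_set k" using assms(1,2) by (auto simp: prime_of_def)
  have fu: "fib_comp us" using M_fib[OF pM(3)] assms(4) by simp
  have "even (sum_list us)" using M_even[OF pM(1)] M_even[OF pM(3)] assms(4) by simp
  moreover have "us @ r' = pre k @ r0" using r0 assms(5) by simp
  ultimately have "us \<in> M_set k" using H[OF ne fu] by blast
  with assms(2) pM assms(4) ne show False by (auto simp: prime_of_def)
qed

lemma U:
  assumes "prime_of (M_set k) p" "prime_of (M_set k) p'" "r \<in> M_set k" "r' \<in> M_set k"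
    "p @ r = p' @ r'"
  shows "p = p' \<and> r = r'"
proof -
  from assms(5) obtain us where
    "(p = p' @ us \<and> us @ r = r') \<or> (p @ us = p' \<and> r = us @ r')"
    by (auto simp: append_eq_append_conv2)
  then show ?thesis
  proof
    assume a: "p = p' @ us \<and> us @ r = r'"
    then have "us = []" using U1[OF assms(2,1,4)] by blast
    then show ?thesis using a by simp
  next
    assume a: "p @ us = p' \<and> r = us @ r'"
    then have "us = []" using U1[OF assms(1,2,3)] by blast
    then show ?thesis using a by simp
  qed
qed

lemma factor_ex: "c \<in> M_set k \<Longrightarrow> \<exists>ps. set ps \<subseteq> {p. prime_of (M_set k) p} \<and> concat ps = c"
proof (induction "length c" arbitrary: c rule: less_induct)
  case less
  show ?case
  proof (cases "c = []")
    case True then show ?thesis by (intro exI[of _ "[]"]) simp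
  next
    case False
    show ?thesis
    proof (cases "prime_of (M_set k) c")
      case True then show ?thesis by (intro exI[of _ "[c]"]) simp
    next
      case np: False
      then obtain a b where ab: "a \<in> M_set k" "b \<in> M_set k" "c = a @ b" "a \<noteq> []" "b \<noteq> []"
        using False less.prems by (auto simp: prime_of_def)
      then have "length a < length c" "length b < length c" by auto
      with less.hyps ab obtain pa pb where
        "set pa \<subseteq> {p. prime_of (M_set k) p}" "concat pa = a"
        "set pb \<subseteq> {p. prime_of (M_set k) p}" "concat pb = b" by metis
      then show ?thesis using ab by (intro exI[of _ "pa @ pb"]) auto
    qed
  qed
qed

lemma factor_uniq:
  "set ps \<subseteq> {p. prime_of (M_set k) p} \<Longrightarrow> set ps' \<subseteq> {p. prime_of (M_set k) p}
   \<Longrightarrow> concat ps = concat ps' \<Longrightarrow> ps = ps'"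
proof (induction ps arbitrary: ps')
  case Nil
  then show ?case by (cases ps') (auto simp: prime_of_def)
next
  case (Cons p xs)
  then obtain p' xs' where ps': "ps' = p' # xs'"
    by (cases ps') (auto simp: prime_of_def)
  have pr: "prime_of (M_set k) p" "prime_of (M_set k) p'" using Cons.prems ps' by auto
  have "concat xs \<in> M_set k" "concat xs' \<in> M_set k"
    using Cons.prems ps' by (auto intro!: M_concat simp: prime_of_def)
  then have "p = p' \<and> concat xs = concat xs'"
    using U[OF pr] Cons.prems ps' by simp
  then show ?case using Cons ps' by auto
qed

lemma free: "free_monoid (M_set k)"
  unfolding free_monoid_def
  using factor_ex factor_uniq by (auto intro: M_closed)


fun ns :: "nat list \<Rightarrow> bool \<Rightarrow> nat list \<Rightarrow> bool" where
  "ns pr b [] = True"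
| "ns pr b (x # xs) = ((b \<longrightarrow> \<not> (\<exists>r. x # xs = pr @ r)) \<and> ns pr (b \<noteq> odd x) xs)"

lemma ns_iff:
  assumes "pr \<noteq> []"
  shows "ns pr b t \<longleftrightarrow> \<not> (\<exists>t1 r. t = t1 @ pr @ r \<and> b \<noteq> odd (sum_list t1))"
proof (induction t arbitrary: b)
  case Nil then show ?case using assms by simp
next
  case (Cons x xs)
  have "(\<exists>t1 r. x # xs = t1 @ pr @ r \<and> b \<noteq> odd (sum_list t1)) \<longleftrightarrow>
        (b \<and> (\<exists>r. x # xs = pr @ r)) \<or> (\<exists>t1 r. xs = t1 @ pr @ r \<and> (b \<noteq> odd x) \<noteq> odd (sum_list t1))"
  proof
    assume "\<exists>t1 r. x # xs = t1 @ pr @ r \<and> b \<noteq> odd (sum_list t1)"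
    then obtain t1 r where h: "x # xs = t1 @ pr @ r" "b \<noteq> odd (sum_list t1)" by blast
    show "(b \<and> (\<exists>r. x # xs = pr @ r)) \<or> (\<exists>t1 r. xs = t1 @ pr @ r \<and> (b \<noteq> odd x) \<noteq> odd (sum_list t1))"
    proof (cases t1)
      case Nil
      then have "b" "x # xs = pr @ r" using h by simp_all
      then show ?thesis by (intro disjI1 conjI exI)
    next
      case (Cons y t1')
      then show ?thesis using h by auto
    qed
  next
    assume "(b \<and> (\<exists>r. x # xs = pr @ r)) \<or> (\<exists>t1 r. xs = t1 @ pr @ r \<and> (b \<noteq> odd x) \<noteq> odd (sum_list t1))"
    then show "\<exists>t1 r. x # xs = t1 @ pr @ r \<and> b \<noteq> odd (sum_list t1)"
    proof
      assume "b \<and> (\<exists>r. x # xs = pr @ r)"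
      then obtain r where "b" "x # xs = pr @ r" by blast
      then have "x # xs = [] @ pr @ r \<and> b \<noteq> odd (sum_list ([]::nat list))" by simp
      then show ?thesis by blast
    next
      assume "\<exists>t1 r. xs = t1 @ pr @ r \<and> (b \<noteq> odd x) \<noteq> odd (sum_list t1)"
      then obtain t1 r where "xs = t1 @ pr @ r" "(b \<noteq> odd x) \<noteq> odd (sum_list t1)" by blast
      then have "x # xs = (x # t1) @ pr @ r \<and> b \<noteq> odd (sum_list (x # t1))" by auto
      then show ?thesis by blast
    qed
  qed
  moreover have "ns pr b (x # xs) \<longleftrightarrow> \<not> (b \<and> (\<exists>r. x # xs = pr @ r)) \<and>
      \<not> (\<exists>t1 r. xs = t1 @ pr @ r \<and> (b \<noteq> odd x) \<noteq> odd (sum_list t1))"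
    using Cons.IH[of "b \<noteq> odd x"] by simp
  ultimately show ?case by blast
qed

lemma ns_rep2: "ns (1 # ps) b (replicate m 2 @ t) = ns (1 # ps) b t"
  by (induction m) auto

lemma sum_pre: "k \<ge> 1 \<Longrightarrow> sum_list (pre k) = 2 * k - 1"
  by (cases k) (auto simp: sum_list_replicate)

lemma M1:
  assumes "k \<ge> 1"
  shows "c \<in> M_set k \<and> c \<noteq> [] \<longleftrightarrow> (\<exists>t. c = pre k @ t \<and> fib_comp t \<and> odd (sum_list t))"
proof -
  have "even (sum_list (pre k @ t)) \<longleftrightarrow> odd (sum_list t)" for t
    using sum_pre[OF assms] assms by (simp add: sum_list_replicate)
  note e = this
  show ?thesis
  proof
    assume "c \<in> M_set k \<and> c \<noteq> []"
    then obtain r where r: "c = pre k @ r" "fib_comp c" "even (sum_list c)" unfolding M_iff by blast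
    then have "fib_comp r" by simp
    moreover have "odd (sum_list r)" using e[of r] r by simp
    ultimately show "\<exists>t. c = pre k @ t \<and> fib_comp t \<and> odd (sum_list t)" using r by blast
  next
    assume "\<exists>t. c = pre k @ t \<and> fib_comp t \<and> odd (sum_list t)"
    then obtain t where t: "c = pre k @ t" "fib_comp t" "odd (sum_list t)" by blast
    then have "fib_comp c" "even (sum_list c)" using e[of t] by simp_all
    then show "c \<in> M_set k \<and> c \<noteq> []" unfolding M_iff using t by blast
  qed
qed

lemma P1:
  assumes k: "k \<ge> 1" and c: "c = pre k @ t" "fib_comp t" "odd (sum_list t)"
  shows "prime_of (M_set k) c \<longleftrightarrow> \<not> (\<exists>t1 r. replicate (k-1) 2 @ t = t1 @ pre k @ r \<and> odd (sum_list t1))"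
proof
  have cM: "c \<in> M_set k" "c \<noteq> []" using M1[OF k] c by blast+
  assume pr: "prime_of (M_set k) c"
  show "\<not> (\<exists>t1 r. replicate (k-1) 2 @ t = t1 @ pre k @ r \<and> odd (sum_list t1))"
  proof
    assume "\<exists>t1 r. replicate (k-1) 2 @ t = t1 @ pre k @ r \<and> odd (sum_list t1)"
    then obtain t1 r where h: "replicate (k-1) 2 @ t = t1 @ pre k @ r" "odd (sum_list t1)" by blast
    define a where "a = 1 # t1"
    define b where "b = pre k @ r"
    have cab: "c = a @ b" using c h by (simp add: a_def b_def)
    have fa: "fib_comp a" "fib_comp b" using M_fib[OF cM(1)] cab by auto
    have ea: "even (sum_list a)" using h by (simp add: a_def)
    have "even (sum_list b)" using M_even[OF cM(1)] ea cab by simp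
    then have bM: "b \<in> M_set k" using fa by (auto simp: M_iff b_def)
    have "a @ b = pre k @ t" using cab c by simp
    then have aM: "a \<in> M_set k" using H[of a] fa ea by (simp add: a_def)
    show False using pr aM bM cab by (auto simp: prime_of_def a_def b_def)
  qed
next
  have cM: "c \<in> M_set k" "c \<noteq> []" using M1[OF k] c by blast+
  assume nh: "\<not> (\<exists>t1 r. replicate (k-1) 2 @ t = t1 @ pre k @ r \<and> odd (sum_list t1))"
  show "prime_of (M_set k) c"
    unfolding prime_of_def
  proof (intro conjI cM allI impI)
    fix a b assume ab: "a \<in> M_set k" "b \<in> M_set k" "c = a @ b"
    show "a = [] \<or> b = []"
    proof (rule ccontr)
      assume "\<not> (a = [] \<or> b = [])"
      then obtain ra rb where ra: "a = pre k @ ra" and rb: "b = pre k @ rb"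
        using ab by (auto simp: M_iff)
      have "even (sum_list a)" using M_even[OF ab(1)] .
      then have "odd (sum_list (replicate (k-1) 2 @ ra))" using ra by simp
      moreover have "replicate (k-1) 2 @ t = (replicate (k-1) 2 @ ra) @ pre k @ rb"
        using ab(3) c ra rb by simp
      ultimately show False using nh by blast
    qed
  qed
qed

lemma prime_char:
  assumes k: "k \<ge> 1"
  shows "prime_of (M_set k) c \<longleftrightarrow> (\<exists>t. c = pre k @ t \<and> fib_comp t \<and> odd (sum_list t) \<and> ns (pre k) False t)"
proof
  assume pr: "prime_of (M_set k) c"
  then have "c \<in> M_set k \<and> c \<noteq> []" by (simp add: prime_of_def)
  then obtain t where t: "c = pre k @ t" "fib_comp t" "odd (sum_list t)" using M1[OF k] by blast
  have "ns (pre k) False (replicate (k-1) 2 @ t)"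
    using P1[OF k t] pr ns_iff[of "pre k" False] by simp
  then show "\<exists>t. c = pre k @ t \<and> fib_comp t \<and> odd (sum_list t) \<and> ns (pre k) False t"
    using t ns_rep2 by blast
next
  assume "\<exists>t. c = pre k @ t \<and> fib_comp t \<and> odd (sum_list t) \<and> ns (pre k) False t"
  then obtain t where t: "c = pre k @ t" "fib_comp t" "odd (sum_list t)" "ns (pre k) False t" by blast
  then have "ns (pre k) False (replicate (k-1) 2 @ t)" using ns_rep2 by blast
  then show "prime_of (M_set k) c"
    using P1[OF k t(1-3)] ns_iff[of "pre k" False] by simp
qed



definition Tset :: "nat \<Rightarrow> nat list set" where
  "Tset k = {replicate i 2 @ q @ [1] @ replicate j 2 | i j q. q \<in> Q_set k}"

lemma P_Tset: "P_set k = {pre k @ t | t. t \<in> Tset k}"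
  unfolding P_set_def Tset_def by auto

lemma Qp_props: "p \<in> Q_primes k \<Longrightarrow> fib_comp p \<and> even (sum_list p)"
  by (auto simp: Q_primes_def sum_list_replicate)

lemma Qcat_props: "set ps \<subseteq> Q_primes k \<Longrightarrow> fib_comp (concat ps) \<and> even (sum_list (concat ps))"
  by (induction ps) (auto dest: Qp_props)

lemma Qcat_start: "set ps \<subseteq> Q_primes k \<Longrightarrow> \<exists>s'. concat ps @ [1] @ replicate j 2 = 1 # s'"
  by (cases ps) (auto simp: Q_primes_def)

lemma not_pre:
  assumes "j' + 2 \<le> k"
  shows "\<not> (\<exists>r. 1 # replicate j' 2 @ 1 # s' = pre k @ r)"
proof
  assume "\<exists>r. 1 # replicate j' 2 @ 1 # s' = pre k @ r"
  then obtain r where "replicate j' 2 @ 1 # s' = replicate (k-1) 2 @ r" by auto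
  then have "(replicate j' 2 @ 1 # s') ! j' = (replicate (k-1) 2 @ r) ! j'" by simp
  moreover have "(replicate j' 2 @ 1 # s') ! j' = 1" by (simp add: nth_append)
  moreover have "j' < k - 1" using assms by simp
  then have "(replicate (k-1) 2 @ r) ! j' = 2" by (simp add: nth_append)
  ultimately show False by simp
qed

lemma ns_Q: "set ps \<subseteq> Q_primes k \<Longrightarrow> ns (pre k) False (concat ps @ [1] @ replicate j 2)"
proof (induction ps)
  case Nil
  have "ns (pre k) True (replicate j 2 @ []) = ns (pre k) True []" by (rule ns_rep2)
  then show ?case by simp
next
  case (Cons p ps)
  then obtain l j' where p: "p = [1] @ replicate l 2 @ [1] @ replicate j' 2" "j' + 2 \<le> k"
    by (auto simp: Q_primes_def)
  have "set ps \<subseteq> Q_primes k" using Cons.prems by simp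
  then obtain s' where s': "concat ps @ [1] @ replicate j 2 = 1 # s'" using Qcat_start by blast
  have ih: "ns (pre k) False (1 # s')" using Cons s' by simp
  have "ns (pre k) False (concat (p # ps) @ [1] @ replicate j 2)
      = ns (pre k) False (1 # replicate l 2 @ 1 # replicate j' 2 @ 1 # s')" using p s' by simp
  also have "\<dots> = ns (pre k) True (replicate l 2 @ 1 # replicate j' 2 @ 1 # s')" by simp
  also have "\<dots> = ns (pre k) True (1 # replicate j' 2 @ 1 # s')" by (rule ns_rep2)
  also have "\<dots> = ns (pre k) False (replicate j' 2 @ 1 # s')" using not_pre[OF p(2)] by simp
  also have "\<dots> = ns (pre k) False (1 # s')" by (rule ns_rep2)
  finally show ?case using ih by simp
qed

lemma split2: "fib_comp x \<Longrightarrow> \<exists>a s. x = replicate a 2 @ s \<and> (s = [] \<or> (\<exists>s'. s = 1 # s'))"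
proof (induction x)
  case Nil then show ?case by auto
next
  case (Cons y ys)
  then have "y = 1 \<or> y = 2" by simp
  then show ?case
  proof
    assume "y = 1" then show ?thesis by (intro exI[of _ 0]) auto
  next
    assume y: "y = 2"
    from Cons obtain a s where "ys = replicate a 2 @ s \<and> (s = [] \<or> (\<exists>s'. s = 1 # s'))" by auto
    then show ?thesis using y by (intro exI[of _ "Suc a"]) auto
  qed
qed

lemma key_inner:
  "fib_comp s \<Longrightarrow> odd (sum_list s) \<Longrightarrow> ns (pre k) False s \<Longrightarrow> s = 1 # s' \<Longrightarrow>
   \<exists>q j. q \<in> Q_set k \<and> s = q @ [1] @ replicate j 2"
proof (induction "length s" arbitrary: s s' rule: less_induct)
  case less
  have fs': "fib_comp s'" and es': "even (sum_list s')" and ns': "ns (pre k) True s'"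
    using less.prems by auto
  obtain l w where w: "s' = replicate l 2 @ w" "w = [] \<or> (\<exists>w'. w = 1 # w')"
    using split2[OF fs'] by blast
  show ?case
  proof (cases "w = []")
    case True
    have "[] \<in> Q_set k" unfolding Q_set_def by (auto intro!: exI[of _ "[]"])
    then show ?thesis using True w less.prems by (intro exI[of _ "[]"] exI[of _ l]) simp
  next
    case False
    then obtain w' where w': "w = 1 # w'" using w by auto
    have "ns (pre k) True (1 # w')" using ns' unfolding w(1) w' ns_rep2 .
    then have nsw: "\<not> (\<exists>r. 1 # w' = pre k @ r)" "ns (pre k) False w'" by auto
    have fw: "fib_comp w'" using fs' w w' by simp
    have ow: "odd (sum_list w')" using es' w w' by (simp add: sum_list_replicate)
    obtain j' v where v: "w' = replicate j' 2 @ v" "v = [] \<or> (\<exists>v'. v = 1 # v')"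
      using split2[OF fw] by blast
    have "v \<noteq> []" using ow v by (auto simp: sum_list_replicate)
    then obtain v' where v': "v = 1 # v'" using v by auto
    have jk: "j' + 2 \<le> k"
    proof (rule ccontr)
      assume "\<not> j' + 2 \<le> k"
      then have "replicate j' 2 = replicate (k-1) 2 @ replicate (j' - (k-1)) 2"
        by (simp add: replicate_add[symmetric])
      then have "1 # w' = pre k @ (replicate (j' - (k-1)) 2 @ v)" using v by simp
      then show False using nsw(1) by blast
    qed
    have nsv: "ns (pre k) False v" using nsw(2) unfolding v(1) ns_rep2 .
    have fv: "fib_comp v" using fw v by simp
    have ov: "odd (sum_list v)" using ow v by (simp add: sum_list_replicate)
    have "length v < length s" using less.prems w w' v by simp
    then obtain q0 j where q0: "q0 \<in> Q_set k" "v = q0 @ [1] @ replicate j 2"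
      using less.hyps[OF _ fv ov nsv v'] by blast
    define blk :: "nat list" where "blk = [1] @ replicate l 2 @ [1] @ replicate j' 2"
    have "blk \<in> Q_primes k" using jk unfolding blk_def Q_primes_def by blast
    moreover obtain ps0 where "set ps0 \<subseteq> Q_primes k" "q0 = concat ps0"
      using q0(1) unfolding Q_set_def by blast
    ultimately have "set (blk # ps0) \<subseteq> Q_primes k \<and> blk @ q0 = concat (blk # ps0)" by simp
    then have "blk @ q0 \<in> Q_set k" unfolding Q_set_def by blast
    moreover have "s = (blk @ q0) @ [1] @ replicate j 2"
      using less.prems w w' v q0 by (simp add: blk_def)
    ultimately show ?thesis by blast
  qed
qed

lemma key:
  assumes k: "k \<ge> 1"
  shows "(fib_comp t \<and> odd (sum_list t) \<and> ns (pre k) False t) \<longleftrightarrow> t \<in> Tset k"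
proof
  assume h: "fib_comp t \<and> odd (sum_list t) \<and> ns (pre k) False t"
  obtain a s where s: "t = replicate a 2 @ s" "s = [] \<or> (\<exists>s'. s = 1 # s')"
    using split2 h by blast
  have "s \<noteq> []" using h s by (auto simp: sum_list_replicate)
  then obtain s' where s': "s = 1 # s'" using s by auto
  have "fib_comp s" "odd (sum_list s)" using h s by (auto simp: sum_list_replicate)
  moreover have "ns (pre k) False s" using h unfolding s(1) ns_rep2 by simp
  ultimately have "fib_comp s" "odd (sum_list s)" "ns (pre k) False s" by auto
  then obtain q j where "q \<in> Q_set k" "s = q @ [1] @ replicate j 2"
    using key_inner s' by blast
  then show "t \<in> Tset k" unfolding Tset_def using s by blast
next
  assume "t \<in> Tset k"
  then obtain i j ps where t: "t = replicate i 2 @ concat ps @ [1] @ replicate j 2"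
    and ps: "set ps \<subseteq> Q_primes k"
    unfolding Tset_def Q_set_def by blast
  show "fib_comp t \<and> odd (sum_list t) \<and> ns (pre k) False t"
  proof (intro conjI)
    show "fib_comp t" "odd (sum_list t)" using Qcat_props[OF ps] t by (auto simp: sum_list_replicate)
    show "ns (pre k) False t" using ns_Q[OF ps, of j] unfolding t ns_rep2 .
  qed
qed

lemma primes_eq:
  assumes k: "k \<ge> 1"
  shows "{c. prime_of (M_set k) c} = P_set k"
  unfolding P_Tset using prime_char[OF k] key[OF k] by blast



lemma len_le_sum: "fib_comp c \<Longrightarrow> length c \<le> sum_list c"
  by (induction c) auto

abbreviation SS :: "nat \<Rightarrow> nat list set" where "SS m \<equiv> {c. fib_comp c \<and> sum_list c = m}"

lemma fin_S: "finite (SS m)"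
proof (rule finite_subset)
  show "SS m \<subseteq> {xs. set xs \<subseteq> {1,2} \<and> length xs \<le> m}"
    using len_le_sum by (auto simp: fib_comp_def)
  show "finite {xs. set xs \<subseteq> {1::nat,2} \<and> length xs \<le> m}"
    by (rule finite_lists_length_le) simp
qed

lemma sum0: "fib_comp c \<Longrightarrow> sum_list c = 0 \<Longrightarrow> c = []"
  using len_le_sum[of c] by (metis le_zero_eq length_0_conv)

lemma S0: "SS 0 = {[]}" using sum0 by auto

lemma S1: "SS (Suc 0) = {[1]}"
proof (rule set_eqI, rule iffI)
  fix c assume "c \<in> SS (Suc 0)"
  then obtain x c' where c: "c = x # c'" "x = 1 \<or> x = 2" "fib_comp c'" "x + sum_list c' = Suc 0"
    by (cases c) auto
  then have "x = 1" "sum_list c' = 0" by auto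
  then show "c \<in> {[1]}" using c sum0 by auto
qed auto

lemma SSS: "SS (Suc (Suc n)) = Cons 1 ` SS (Suc n) \<union> Cons 2 ` SS n"
proof (rule set_eqI, rule iffI)
  fix c assume "c \<in> SS (Suc (Suc n))"
  then obtain x c' where c: "c = x # c'" "x = 1 \<or> x = 2" "fib_comp c'" "x + sum_list c' = Suc (Suc n)"
    by (cases c) auto
  then show "c \<in> Cons 1 ` SS (Suc n) \<union> Cons 2 ` SS n" by auto
qed auto

lemma card_S: "card (SS m) = fib (m + 1)"
proof (induction m rule: fib.induct)
  case 1 then show ?case unfolding S0 by simp
next
  case 2 then show ?case unfolding S1 by simp
next
  case (3 n)
  have "card (SS (Suc (Suc n))) = card (Cons 1 ` SS (Suc n)) + card (Cons 2 ` SS n)"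
    unfolding SSS by (rule card_Un_disjoint) (auto intro: fin_S)
  also have "\<dots> = card (SS (Suc n)) + card (SS n)"
    by (simp add: card_image)
  also have "\<dots> = fib (Suc (Suc n) + 1)" using 3 by simp
  finally show ?case .
qed

lemma Mcount:
  assumes k: "k \<ge> 1"
  shows "card {c \<in> M_set k. sum_list c = 2 * n} =
     (if n = 0 then 1 else if k \<le> n then fib (2 * (n - k) + 2) else 0)"
proof (cases "n = 0")
  case True
  have "{c \<in> M_set k. sum_list c = 2 * n} = {[]}" using True sum0 M_fib by auto
  then show ?thesis using True by simp
next
  case False
  have sp: "sum_list (pre k @ t) = sum_list t + (2 * k - 1)" for t using sum_pre[OF k] by simp
  have eq: "{c \<in> M_set k. sum_list c = 2 * n} = (\<lambda>t. pre k @ t) ` {t. fib_comp t \<and> sum_list t + (2 * k - 1) = 2 * n}"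
  proof (rule set_eqI, rule iffI)
    fix c assume c: "c \<in> {c \<in> M_set k. sum_list c = 2 * n}"
    then have "c \<noteq> []" using False by auto
    then obtain t where t: "c = pre k @ t" "fib_comp t" "odd (sum_list t)" using M1[OF k] c by blast
    then show "c \<in> (\<lambda>t. pre k @ t) ` {t. fib_comp t \<and> sum_list t + (2 * k - 1) = 2 * n}"
      using c sp by auto
  next
    fix c assume "c \<in> (\<lambda>t. pre k @ t) ` {t. fib_comp t \<and> sum_list t + (2 * k - 1) = 2 * n}"
    then obtain t where t: "c = pre k @ t" "fib_comp t" "sum_list t + (2 * k - 1) = 2 * n" by blast
    then have "odd (sum_list t)" using k by presburger
    then have "c \<in> M_set k" using M1[OF k] t by blast
    then show "c \<in> {c \<in> M_set k. sum_list c = 2 * n}" using t sp by simp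
  qed
  have inj: "inj_on (\<lambda>t. pre k @ t) X" for X by (rule inj_onI) simp
  show ?thesis
  proof (cases "k \<le> n")
    case True
    have e1: "{t. fib_comp t \<and> sum_list t + (2 * k - 1) = 2 * n} = SS (2 * (n - k) + 1)"
      using True k by auto
    have "card ((\<lambda>t. pre k @ t) ` SS (2 * (n - k) + 1)) = fib (2 * (n - k) + 2)"
      using card_S card_image[OF inj] by simp
    then show ?thesis unfolding eq e1 using False True by simp
  next
    case nk: False
    have e0: "{t. fib_comp t \<and> sum_list t + (2 * k - 1) = 2 * n} = {}"
      using nk k by auto
    show ?thesis unfolding eq e0 using False nk by simp
  qed
qed

lemma genM:
  assumes k: "k \<ge> 1"
  shows "gen_fun (M_set k) = 1 + Abs_fps (\<lambda>m. if k \<le> m then of_nat (fib (2 * (m - k) + 2)) else 0)"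
  unfolding gen_fun_def
  by (rule fps_ext) (use k in \<open>auto simp: Mcount[OF k]\<close>)

abbreviation PR where "PR k \<equiv> {c. prime_of (M_set k) c}"

lemma PR_sub: "{c \<in> PR k. sum_list c = m} \<subseteq> SS m"
  by (auto simp: prime_of_def dest: M_fib)
lemma MS_sub: "{c \<in> M_set k. sum_list c = m} \<subseteq> SS m"
  by (auto dest: M_fib)

lemma conv:
  assumes k: "k \<ge> 1" and n: "n \<ge> 1"
  shows "card {c \<in> M_set k. sum_list c = 2 * n} =
    (\<Sum>i=0..n. card {c \<in> PR k. sum_list c = 2 * i} * card {c \<in> M_set k. sum_list c = 2 * (n - i)})"
proof -
  define A where "A i = {c \<in> PR k. sum_list c = 2 * i}" for i
  define B where "B i = {c \<in> M_set k. sum_list c = 2 * i}" for i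
  have finA: "finite (A i)" for i unfolding A_def by (rule finite_subset[OF PR_sub fin_S])
  have finB: "finite (B i)" for i unfolding B_def by (rule finite_subset[OF MS_sub fin_S])
  have eq: "B n = (\<lambda>(p, r). p @ r) ` (\<Union>i\<in>{0..n}. A i \<times> B (n - i))"
  proof (rule set_eqI, rule iffI)
    fix c assume c: "c \<in> B n"
    then have cM: "c \<in> M_set k" "sum_list c = 2 * n" by (auto simp: B_def)
    then have "c \<noteq> []" using n by auto
    obtain ps where ps: "set ps \<subseteq> PR k" "concat ps = c" using factor_ex[OF cM(1)] by blast
    then obtain p ps' where pps: "ps = p # ps'" using \<open>c \<noteq> []\<close> by (cases ps) auto
    have pp: "prime_of (M_set k) p" using ps pps by auto
    then have pM: "p \<in> M_set k" by (simp add: prime_of_def)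
    have rM: "concat ps' \<in> M_set k" using ps pps by (auto intro!: M_concat simp: prime_of_def)
    obtain i where i: "sum_list p = 2 * i" using M_even[OF pM] by blast
    obtain j where j: "sum_list (concat ps') = 2 * j" using M_even[OF rM] by blast
    have "c = p @ concat ps'" using ps(2) pps by simp
    then have "sum_list c = sum_list p + sum_list (concat ps')" by simp
    then have "2 * i + 2 * j = 2 * n" using cM(2) i j by linarith
    then have ij: "i \<le> n" "j = n - i" by auto
    have "(p, concat ps') \<in> A i \<times> B (n - i)" using pp rM i j ij by (auto simp: A_def B_def)
    then show "c \<in> (\<lambda>(p, r). p @ r) ` (\<Union>i\<in>{0..n}. A i \<times> B (n - i))"
      using ij ps pps by force
  next
    fix c assume "c \<in> (\<lambda>(p, r). p @ r) ` (\<Union>i\<in>{0..n}. A i \<times> B (n - i))"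
    then obtain i p r where "i \<le> n" "p \<in> A i" "r \<in> B (n - i)" "c = p @ r" by auto
    then show "c \<in> B n" by (auto simp: A_def B_def prime_of_def intro: M_closed)
  qed
  have inj: "inj_on (\<lambda>(p, r). p @ r) (\<Union>i\<in>{0..n}. A i \<times> B (n - i))"
  proof (rule inj_onI, clarify)
    fix p r p' r' i i'
    assume "p \<in> A i" "r \<in> B (n - i)" "p' \<in> A i'" "r' \<in> B (n - i')" "p @ r = p' @ r'"
    then show "p = p' \<and> r = r'" using U[of k p p' r r'] by (auto simp: A_def B_def)
  qed
  have "card (B n) = card (\<Union>i\<in>{0..n}. A i \<times> B (n - i))"
    unfolding eq by (rule card_image[OF inj])
  also have "\<dots> = (\<Sum>i=0..n. card (A i \<times> B (n - i)))"
  proof (rule card_UN_disjoint)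
    show "finite {0..n}" by simp
    show "\<forall>i\<in>{0..n}. finite (A i \<times> B (n - i))" using finA finB by blast
    show "\<forall>i\<in>{0..n}. \<forall>j\<in>{0..n}. i \<noteq> j \<longrightarrow> A i \<times> B (n - i) \<inter> A j \<times> B (n - j) = {}"
      by (auto simp: A_def)
  qed
  also have "\<dots> = (\<Sum>i=0..n. card (A i) * card (B (n - i)))"
    by (simp add: card_cartesian_product)
  finally show ?thesis unfolding A_def B_def .
qed

lemma genPM:
  assumes k: "k \<ge> 1"
  shows "gen_fun (M_set k) = 1 + gen_fun (PR k) * gen_fun (M_set k)"
proof (rule fps_ext)
  fix n
  show "gen_fun (M_set k) $ n = (1 + gen_fun (PR k) * gen_fun (M_set k)) $ n"
  proof (cases "n = 0")
    case True
    have e: "{c \<in> PR k. sum_list c = 2 * 0} = {}" using sum0 by (auto simp: prime_of_def dest: M_fib)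
    have a: "gen_fun (PR k) $ 0 = 0" unfolding gen_fun_def fps_nth_Abs_fps e by simp
    have b: "gen_fun (M_set k) $ 0 = 1" unfolding gen_fun_def fps_nth_Abs_fps Mcount[OF k] by simp
    show ?thesis using True a b by simp
  next
    case False
    then show ?thesis
      unfolding gen_fun_def
      using conv[OF k, of n] by (simp add: of_nat_sum fps_mult_nth)
  qed
qed

theorem main:
  fixes k :: nat
  assumes "k \<ge> 1"
  shows "free_monoid (M_set k)
    \<and> {c. prime_of (M_set k) c} = P_set k
    \<and> (\<forall>n. finite {c \<in> P_set k. sum_list c = 2 * n})
    \<and> gen_fun (P_set k) = fps_X ^ k / (1 - 3 * fps_X + fps_X ^ 2 + fps_X ^ k)
    \<and> 1 + Abs_fps (\<lambda>m. if k \<le> m then of_nat (fib (2 * (m - k) + 2)) else 0)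
        = (1 + fps_X ^ k / (1 - 3 * fps_X + fps_X ^ 2) :: rat fps)
    \<and> (1 + fps_X ^ k / (1 - 3 * fps_X + fps_X ^ 2) :: rat fps)
        = inverse (1 - fps_X ^ k / (1 - 3 * fps_X + fps_X ^ 2 + fps_X ^ k))"
proof (intro conjI allI)
  note k = assms
  show "free_monoid (M_set k)" by (rule free)
  show pe: "{c. prime_of (M_set k) c} = P_set k" by (rule primes_eq[OF k])
  show "finite {c \<in> P_set k. sum_list c = 2 * n}" for n
    unfolding pe[symmetric] by (rule finite_subset[OF PR_sub fin_S])
  show c5: "1 + Abs_fps (\<lambda>m. if k \<le> m then of_nat (fib (2 * (m - k) + 2)) else 0)
        = (1 + fps_X ^ k / (1 - 3 * fps_X + fps_X ^ 2) :: rat fps)" by (rule conj5)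
  show "(1 + fps_X ^ k / (1 - 3 * fps_X + fps_X ^ 2) :: rat fps)
        = inverse (1 - fps_X ^ k / (1 - 3 * fps_X + fps_X ^ 2 + fps_X ^ k))" by (rule conj6[OF k])
  define D where "D = EE + fps_X ^ k"
  define E where "E = EE"
  define Pf where "Pf = gen_fun (PR k)"
  define Mf where "Mf = gen_fun (M_set k)"
  have D0: "D $ 0 = 1" using k by (simp add: D_def)
  have 1: "fps_X ^ k / E = fps_X^k * inverse E" unfolding E_def by (rule fps_divide_unit) simp
  have 2: "fps_X ^ k / D = fps_X^k * inverse D" by (rule fps_divide_unit) (simp add: D0)
  have u: "E * inverse E = 1" unfolding E_def by (rule inverse_mult_eq_1') simp
  have v: "D * inverse D = 1" by (rule inverse_mult_eq_1') (simp add: D0)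
  have DE: "D = E + fps_X^k" by (simp add: D_def E_def)
  have "Mf = 1 + fps_X^k / E"
    unfolding Mf_def genM[OF k] c5 E_def ..
  then have Mf1: "Mf = 1 + fps_X^k * inverse E" using 1 by simp
  have Mf2: "Mf = 1 + Pf * Mf" unfolding Mf_def Pf_def by (rule genPM[OF k])
  have Mf3: "Mf = D * inverse E" using Mf1 u unfolding DE by (simp add: algebra_simps)
  have pd: "Pf * D * inverse E = fps_X^k * inverse E" using Mf1 Mf2 Mf3 by (simp add: mult.assoc)
  have ie: "inverse E * E = 1" using u by (simp add: mult.commute)
  have "Pf * D = Pf * D * inverse E * E" using ie by (metis mult.assoc mult_1_right)
  also have "\<dots> = fps_X^k * inverse E * E" using pd by (simp only:)
  also have "\<dots> = fps_X^k" using ie by (metis mult.assoc mult_1_right)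
  finally have "Pf * D = fps_X^k" .
  then have "Pf = fps_X^k * inverse D" using v by (metis mult.assoc mult.right_neutral)
  then show "gen_fun (P_set k) = fps_X ^ k / (1 - 3 * fps_X + fps_X ^ 2 + fps_X ^ k)"
    using 2 unfolding Pf_def pe D_def by simp
qed


theorem proposition11:
  fixes k :: nat
  assumes "k \<ge> 1"
  shows "free_monoid (M_set k)
    \<and> {c. prime_of (M_set k) c} = P_set k
    \<and> (\<forall>n. finite {c \<in> P_set k. sum_list c = 2 * n})
    \<and> gen_fun (P_set k) = fps_X ^ k / (1 - 3 * fps_X + fps_X ^ 2 + fps_X ^ k)
    \<and> 1 + Abs_fps (\<lambda>m. if k \<le> m then of_nat (fib (2 * (m - k) + 2)) else 0)
        = (1 + fps_X ^ k / (1 - 3 * fps_X + fps_X ^ 2) :: rat fps)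
    \<and> (1 + fps_X ^ k / (1 - 3 * fps_X + fps_X ^ 2) :: rat fps)
        = inverse (1 - fps_X ^ k / (1 - 3 * fps_X + fps_X ^ 2 + fps_X ^ k))"
  using main[OF assms] .

end
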